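(* Let $\nu\in\mathcal{S}^{n-1}$, $\Pi_\nu(0):=\{x:-1\le x\cdot\nu\le0\}$, $\Gamma_N:=\{x\cdot\nu=0\}$, $\Gamma_D:=\{x\cdot\nu=-1\}$, and for $x\in\mathbb{R}^n$ write $x'=x-(x\cdot\nu)\nu$. Let $R,\varepsilon>0$ and $\Sigma_R:=\Pi_\nu(0)\cap\{|x'|\le R\}$. Suppose $\omega$ satisfies in the viscosity sense: (a) $-\mathcal{P}^+(D^2\omega)\le0$ and $-\mathcal{P}^-(D^2\omega)\ge0$ in $\Sigma_R$; (b) $\partial\omega/\partial\nu=0$ on $\Gamma_N\cap\Sigma_R$; (c) $\omega=0$ on $\Gamma_D\cap\Sigma_R$; (d) $|\omega|\le R^{2-\varepsilon}$. Then $|\omega|\le CR^{-\varepsilon}$ in $\Pi_\nu(0)\cap\{|x'|\le1\}$, where $C>0$ is a constant depending only on $n,\lambda,\Lambda$.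
   Context: Fix $0<\lambda<\Lambda$. For a real symmetric matrix $M$ with eigenvalues $e_i$, $\mathcal{P}^+(M)=\Lambda\sum_{e_i>0}e_i+\lambda\sum_{e_i<0}e_i$ and $\mathcal{P}^-(M)=\lambda\sum_{e_i>0}e_i+\Lambda\sum_{e_i<0}e_i$ (Pucci extremal operators). *)

theory Defs
  imports "HOL-Analysis.Analysis" "HOL-Computational_Algebra.Polynomial"
begin

text \<open>Characteristic polynomial det(X I - M) of a square real matrix, and its
  eigenvalues (with algebraic multiplicity) as the multiset of its real roots.
  For symmetric M the characteristic polynomial splits over the reals, so this
  multiset is exactly the multiset of eigenvalues.\<close>
definition charpoly :: "real^'n^'n \<Rightarrow> real poly" where
  "charpoly M = det (\<chi> i j. (if i = j then [:0, 1:] else 0) - [:M $ i $ j:])"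

definition eigenvalues_mset :: "real^'n^'n \<Rightarrow> real multiset" where
  "eigenvalues_mset M = proots (charpoly M)"

definition pucci_plus :: "real \<Rightarrow> real \<Rightarrow> real^'n^'n \<Rightarrow> real" where
  "pucci_plus lam Lam M =
     Lam * sum_mset (filter_mset (\<lambda>e. e > 0) (eigenvalues_mset M))
   + lam * sum_mset (filter_mset (\<lambda>e. e < 0) (eigenvalues_mset M))"

definition pucci_minus :: "real \<Rightarrow> real \<Rightarrow> real^'n^'n \<Rightarrow> real" where
  "pucci_minus lam Lam M =
     lam * sum_mset (filter_mset (\<lambda>e. e > 0) (eigenvalues_mset M))
   + Lam * sum_mset (filter_mset (\<lambda>e. e < 0) (eigenvalues_mset M))"

definition C2_test :: "(real^'n \<Rightarrow> real) \<Rightarrow> (real^'n \<Rightarrow> real^'n) \<Rightarrow> (real^'n \<Rightarrow> real^'n^'n) \<Rightarrow> bool" where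
  "C2_test phi Dphi D2phi \<longleftrightarrow>
     (\<forall>x. (phi has_derivative (\<lambda>h. Dphi x \<bullet> h)) (at x)) \<and>
     (\<forall>x. (Dphi has_derivative (\<lambda>h. D2phi x *v h)) (at x)) \<and>
     continuous_on UNIV D2phi"

definition touches_above :: "(real^'n) set \<Rightarrow> (real^'n \<Rightarrow> real) \<Rightarrow> (real^'n \<Rightarrow> real) \<Rightarrow> real^'n \<Rightarrow> bool" where
  "touches_above S u phi x0 \<longleftrightarrow>
     (\<exists>\<delta>>0. \<forall>y\<in>S. dist y x0 < \<delta> \<longrightarrow> u y - phi y \<le> u x0 - phi x0)"

definition touches_below :: "(real^'n) set \<Rightarrow> (real^'n \<Rightarrow> real) \<Rightarrow> (real^'n \<Rightarrow> real) \<Rightarrow> real^'n \<Rightarrow> bool" where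
  "touches_below S u phi x0 \<longleftrightarrow>
     (\<exists>\<delta>>0. \<forall>y\<in>S. dist y x0 < \<delta> \<longrightarrow> u y - phi y \<ge> u x0 - phi x0)"

definition slab :: "real^'n \<Rightarrow> (real^'n) set" where
  "slab \<nu> = {x. -1 \<le> x \<bullet> \<nu> \<and> x \<bullet> \<nu> \<le> 0}"

definition GammaN :: "real^'n \<Rightarrow> (real^'n) set" where
  "GammaN \<nu> = {x. x \<bullet> \<nu> = 0}"

definition GammaD :: "real^'n \<Rightarrow> (real^'n) set" where
  "GammaD \<nu> = {x. x \<bullet> \<nu> = -1}"

definition tang :: "real^'n \<Rightarrow> real^'n \<Rightarrow> real^'n" where
  "tang \<nu> x = x - (x \<bullet> \<nu>) *\<^sub>R \<nu>"

definition SigmaR :: "real^'n \<Rightarrow> real \<Rightarrow> (real^'n) set" where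
  "SigmaR \<nu> R = slab \<nu> \<inter> {x. norm (tang \<nu> x) \<le> R}"

definition visc_sub_Pplus :: "real \<Rightarrow> real \<Rightarrow> (real^'n) set \<Rightarrow> (real^'n \<Rightarrow> real) \<Rightarrow> bool" where
  "visc_sub_Pplus lam Lam S w \<longleftrightarrow>
     (\<forall>x0\<in>interior S. \<forall>phi Dphi D2phi. C2_test phi Dphi D2phi \<and> touches_above S w phi x0
        \<longrightarrow> - pucci_plus lam Lam (D2phi x0) \<le> 0)"

definition visc_super_Pminus :: "real \<Rightarrow> real \<Rightarrow> (real^'n) set \<Rightarrow> (real^'n \<Rightarrow> real) \<Rightarrow> bool" where
  "visc_super_Pminus lam Lam S w \<longleftrightarrow>
     (\<forall>x0\<in>interior S. \<forall>phi Dphi D2phi. C2_test phi Dphi D2phi \<and> touches_below S w phi x0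
        \<longrightarrow> - pucci_minus lam Lam (D2phi x0) \<ge> 0)"

text \<open>Viscosity sense of the homogeneous Neumann condition dw/dnu = 0 on the points B
  of the boundary of S, nu being the outward normal there (sub- and supersolution).\<close>
definition visc_neumann :: "real^'n \<Rightarrow> (real^'n) set \<Rightarrow> (real^'n) set \<Rightarrow> (real^'n \<Rightarrow> real) \<Rightarrow> bool" where
  "visc_neumann \<nu> S B w \<longleftrightarrow>
     (\<forall>x0\<in>B. \<forall>phi Dphi D2phi. C2_test phi Dphi D2phi \<and> touches_above S w phi x0
        \<longrightarrow> Dphi x0 \<bullet> \<nu> \<le> 0) \<and>
     (\<forall>x0\<in>B. \<forall>phi Dphi D2phi. C2_test phi Dphi D2phi \<and> touches_below S w phi x0
        \<longrightarrow> Dphi x0 \<bullet> \<nu> \<ge> 0)"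

end

theory Submission imports Defs begin

lemma det_poly_eval:
  fixes P :: "real poly^'n^'n"
  shows "poly (det P) x = det (\<chi> i j. poly (P$i$j) x)"
  unfolding det_def by (simp add: poly_sum poly_prod)

lemma quad_det:
  fixes \<nu> :: "real^'n"
  assumes "norm \<nu> = 1"
  shows "det (\<chi> i j. (if i=j then d else 0) - \<gamma>*\<nu>$i*\<nu>$j) = d^(CARD('n)-1)*(d-\<gamma>)"
proof -
  obtain A where A: "orthogonal_matrix A" "A *v (axis k 1) = \<nu>"
    using orthogonal_matrix_exists_basis assms by metis
  define D :: "real^'n^'n" where "D = (\<chi> i j. if i = j then (if i = k then d - \<gamma> else d) else 0)"
  have Ak: "A$i$k = \<nu>$i" for i
    using A(2) by (auto simp: matrix_vector_mult_def axis_def vec_eq_iff if_distrib cong: if_cong)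
  have AAT: "(\<Sum>l\<in>UNIV. A$i$l * A$j$l) = (if i = j then 1 else 0)" for i j
  proof -
    have "(A ** transpose A) $ i $ j = mat 1 $ i $ j" using A(1) by (simp add: orthogonal_matrix_def)
    thus ?thesis by (simp add: matrix_matrix_mult_def transpose_def mat_def)
  qed
  have AD: "A ** D = (\<chi> i l. A$i$l * D$l$l)"
    by (simp add: vec_eq_iff matrix_matrix_mult_def D_def if_distrib cong: if_cong)
  have eq: "(\<chi> i j. (if i=j then d else 0) - \<gamma>*\<nu>$i*\<nu>$j) = A ** D ** transpose A"
  proof -
    have "(A ** D ** transpose A) $ i $ j = (if i=j then d else 0) - \<gamma>*\<nu>$i*\<nu>$j" for i j
    proof -
      have "(A ** D ** transpose A) $ i $ j = (\<Sum>l\<in>UNIV. A$i$l * D$l$l * A$j$l)"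
        unfolding AD by (simp add: matrix_matrix_mult_def transpose_def)
      also have "\<dots> = (\<Sum>l\<in>UNIV. d * (A$i$l * A$j$l) - (if l = k then \<gamma> * A$i$l * A$j$l else 0))"
        by (intro sum.cong) (auto simp: D_def algebra_simps)
      also have "\<dots> = d * (\<Sum>l\<in>UNIV. A$i$l * A$j$l) - \<gamma> * A$i$k * A$j$k"
        by (simp add: sum_subtractf sum_distrib_left)
      also have "\<dots> = (if i=j then d else 0) - \<gamma>*\<nu>$i*\<nu>$j"
        by (simp add: AAT Ak)
      finally show ?thesis .
    qed
    thus ?thesis by (simp add: vec_eq_iff)
  qed
  have dA: "det A * det A = 1"
    using det_orthogonal_matrix[OF A(1)] by auto
  have "det (A ** D ** transpose A) = det D"
    using dA by (simp add: det_mul det_transpose)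
  also have "det D = (\<Prod>i\<in>UNIV. D$i$i)"
    by (rule det_diagonal) (simp add: D_def)
  also have "\<dots> = (d - \<gamma>) * (\<Prod>i\<in>UNIV - {k}. D$i$i)"
    by (simp add: prod.remove[of UNIV k] D_def)
  also have "(\<Prod>i\<in>UNIV - {k}. D$i$i) = (\<Prod>i\<in>UNIV - {k}. d)"
    by (rule prod.cong) (auto simp: D_def)
  also have "\<dots> = d^(CARD('n)-1)" by (simp add: card_Diff_singleton)
  finally show ?thesis using eq by simp
qed

lemma eig:
  fixes \<nu> :: "real^'n"
  assumes "norm \<nu> = 1"
  shows "eigenvalues_mset (\<chi> i j. \<alpha>*(if i=j then 1 else 0) + \<gamma>*\<nu>$i*\<nu>$j)
        = replicate_mset (CARD('n)-1) \<alpha> + {#\<alpha>+\<gamma>#}"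
proof -
  let ?M = "(\<chi> i j. \<alpha>*(if i=j then 1 else 0) + \<gamma>*\<nu>$i*\<nu>$j) :: real^'n^'n"
  have "charpoly ?M = [:-\<alpha>,1:]^(CARD('n)-1) * [:-(\<alpha>+\<gamma>),1:]"
  proof (rule poly_eq_poly_eq_iff[THEN iffD1], rule ext)
    fix x :: real
    have "poly (charpoly ?M) x = det (\<chi> i j. (if i=j then x - \<alpha> else 0) - \<gamma>*\<nu>$i*\<nu>$j)"
      unfolding charpoly_def det_poly_eval
      by (rule arg_cong[where f=det]) (simp add: vec_eq_iff)
    also have "\<dots> = (x-\<alpha>)^(CARD('n)-1)*(x-\<alpha>-\<gamma>)" by (rule quad_det[OF assms])
    finally show "poly (charpoly ?M) x = poly ([:-\<alpha>,1:]^(CARD('n)-1) * [:-(\<alpha>+\<gamma>),1:]) x"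
      by (simp add: poly_power algebra_simps)
  qed
  hence "proots (charpoly ?M) = proots ([:-\<alpha>,1:]^(CARD('n)-1)) + proots [:-(\<alpha>+\<gamma>),1:]"
    by (simp only:) (rule proots_mult; simp)
  hence "proots (charpoly ?M) = repeat_mset (CARD('n)-1) {#\<alpha>#} + {#\<alpha>+\<gamma>#}"
    by (simp only: proots_power proots_linear_factor minus_minus)
  thus ?thesis unfolding eigenvalues_mset_def by (simp add: repeat_mset_replicate_mset)
qed

lemma quad_C2:
  fixes \<nu> :: "real^'n"
  shows "C2_test (\<lambda>x. \<alpha>/2*(x\<bullet>x) + \<gamma>/2*(x\<bullet>\<nu>)^2 + b*(x\<bullet>\<nu>) + c)
           (\<lambda>x. \<alpha> *\<^sub>R x + (\<gamma>*(x\<bullet>\<nu>) + b) *\<^sub>R \<nu>)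
           (\<lambda>x. \<chi> i j. \<alpha>*(if i=j then 1 else 0) + \<gamma>*\<nu>$i*\<nu>$j)"
  unfolding C2_test_def
proof (intro conjI allI)
  fix x :: "real^'n"
  show "((\<lambda>x. \<alpha>/2*(x\<bullet>x) + \<gamma>/2*(x\<bullet>\<nu>)^2 + b*(x\<bullet>\<nu>) + c) has_derivative
        (\<lambda>h. (\<alpha> *\<^sub>R x + (\<gamma>*(x\<bullet>\<nu>) + b) *\<^sub>R \<nu>) \<bullet> h)) (at x)"
    by (rule derivative_eq_intros refl | simp)+ (auto simp: algebra_simps inner_commute fun_eq_iff inner_add_left)
  have "((\<lambda>x. \<alpha> *\<^sub>R x + (\<gamma>*(x\<bullet>\<nu>) + b) *\<^sub>R \<nu>) has_derivative
        (\<lambda>h. \<alpha> *\<^sub>R h + (\<gamma>*(h\<bullet>\<nu>)) *\<^sub>R \<nu>)) (at x)"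
    by (rule derivative_eq_intros refl | simp)+
  moreover have "(\<lambda>h. \<alpha> *\<^sub>R h + (\<gamma>*(h\<bullet>\<nu>)) *\<^sub>R \<nu>) =
       (\<lambda>h. (\<chi> i j. \<alpha>*(if i=j then 1 else 0) + \<gamma>*\<nu>$i*\<nu>$j) *v h)"
  proof (intro ext)
    fix h :: "real^'n"
    have "(\<Sum>j\<in>UNIV. (\<alpha>*(if i=j then 1 else 0) + \<gamma>*\<nu>$i*\<nu>$j) * h$j)
        = (\<Sum>j\<in>UNIV. (if i=j then \<alpha> * h$j else 0)) + \<gamma>*\<nu>$i*(\<Sum>j\<in>UNIV. \<nu>$j * h$j)" for i
      by (simp add: distrib_right sum.distrib sum_distrib_left mult.assoc)
         (simp add: sum_distrib_left[symmetric] of_bool_def[symmetric])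
    thus "\<alpha> *\<^sub>R h + (\<gamma>*(h\<bullet>\<nu>)) *\<^sub>R \<nu> = (\<chi> i j. \<alpha>*(if i=j then 1 else 0) + \<gamma>*\<nu>$i*\<nu>$j) *v h"
      by (simp add: vec_eq_iff matrix_vector_mult_def inner_vec_def mult.commute mult.left_commute)
  qed
  ultimately show "((\<lambda>x. \<alpha> *\<^sub>R x + (\<gamma>*(x\<bullet>\<nu>) + b) *\<^sub>R \<nu>) has_derivative
        (\<lambda>h. (\<chi> i j. \<alpha>*(if i=j then 1 else 0) + \<gamma>*\<nu>$i*\<nu>$j) *v h)) (at x)"
    by simp
qed simp

lemma filter_repl: "filter_mset P (replicate_mset n a) = (if P a then replicate_mset n a else {#})"
  by (induction n) auto

lemma pplus_val:
  fixes \<nu> :: "real^'n"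
  assumes "norm \<nu> = 1" "\<alpha> > 0" "\<alpha> + \<gamma> < 0"
  shows "pucci_plus lam Lam (\<chi> i j. \<alpha>*(if i=j then 1 else 0) + \<gamma>*\<nu>$i*\<nu>$j :: real^'n^'n)
     = Lam * (real (CARD('n)-1) * \<alpha>) + lam * (\<alpha>+\<gamma>)"
  unfolding pucci_plus_def eig[OF assms(1)] using assms(2,3) by (simp add: filter_repl of_nat_diff)

lemma pminus_val:
  fixes \<nu> :: "real^'n"
  assumes "norm \<nu> = 1" "\<alpha> < 0" "\<alpha> + \<gamma> > 0"
  shows "pucci_minus lam Lam (\<chi> i j. \<alpha>*(if i=j then 1 else 0) + \<gamma>*\<nu>$i*\<nu>$j :: real^'n^'n)
     = lam * (\<alpha>+\<gamma>) + Lam * (real (CARD('n)-1) * \<alpha>)"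
  unfolding pucci_minus_def eig[OF assms(1)] using assms(2,3) by (simp add: filter_repl of_nat_diff)

lemma tang_sq:
  fixes \<nu> x :: "real^'n"
  assumes "norm \<nu> = 1"
  shows "(norm (tang \<nu> x))^2 = x\<bullet>x - (x\<bullet>\<nu>)^2"
proof -
  have nn: "\<nu>\<bullet>\<nu> = 1" using assms by (metis norm_eq_1)
  have "(norm (tang \<nu> x))^2 = (x - (x\<bullet>\<nu>) *\<^sub>R \<nu>) \<bullet> (x - (x\<bullet>\<nu>) *\<^sub>R \<nu>)"
    by (simp add: tang_def power2_norm_eq_inner)
  also have "\<dots> = x\<bullet>x - (x\<bullet>\<nu>)^2"
    by (simp add: inner_diff_left inner_diff_right nn inner_commute power2_eq_square)
  finally show ?thesis .
qed

lemma cont_tang: "continuous_on UNIV (\<lambda>x. norm (tang \<nu> x))"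
  unfolding tang_def by (intro continuous_intros)

lemma interior_Sigma:
  fixes \<nu> x :: "real^'n"
  assumes "-1 < x\<bullet>\<nu>" "x\<bullet>\<nu> < 0" "norm (tang \<nu> x) < R"
  shows "x \<in> interior (SigmaR \<nu> R)"
proof -
  let ?U = "{x. -1 < x\<bullet>\<nu>} \<inter> {x. x\<bullet>\<nu> < 0} \<inter> {x. norm (tang \<nu> x) < R}"
  have "open ?U"
    by (intro open_Int open_Collect_less continuous_intros cont_tang)
  moreover have "?U \<subseteq> SigmaR \<nu> R" by (auto simp: SigmaR_def slab_def)
  ultimately have "?U \<subseteq> interior (SigmaR \<nu> R)" by (rule interior_maximal[rotated])
  thus ?thesis using assms by auto
qed

lemma compact_Sigma:
  fixes \<nu> :: "real^'n"
  assumes "norm \<nu> = 1"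
  shows "compact (SigmaR \<nu> R)"
proof -
  have eq: "SigmaR \<nu> R = {x. -1 \<le> x\<bullet>\<nu>} \<inter> {x. x\<bullet>\<nu> \<le> 0} \<inter> {x. norm (tang \<nu> x) \<le> R}"
    by (auto simp: SigmaR_def slab_def)
  have "closed (SigmaR \<nu> R)" unfolding eq
    by (intro closed_Int closed_Collect_le continuous_intros cont_tang)
  moreover have "bounded (SigmaR \<nu> R)"
    unfolding bounded_iff
  proof (intro exI ballI)
    fix x assume x: "x \<in> SigmaR \<nu> R"
    have "x = tang \<nu> x + (x\<bullet>\<nu>) *\<^sub>R \<nu>" by (simp add: tang_def)
    hence "norm x \<le> norm (tang \<nu> x) + norm ((x\<bullet>\<nu>) *\<^sub>R \<nu>)" by (metis norm_triangle_ineq)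
    also have "\<dots> \<le> R + 1" using x assms by (auto simp: SigmaR_def slab_def)
    finally show "norm x \<le> R + 1" .
  qed
  ultimately show ?thesis by (simp add: compact_eq_bounded_closed)
qed

theorem corollary2p10:
  fixes lam Lam :: real
  assumes "0 < lam" and "lam < Lam"
  shows "\<exists>C>0. \<forall>(\<nu>::real^'n) (R::real) (\<epsilon>::real) (w::real^'n \<Rightarrow> real).
           norm \<nu> = 1 \<longrightarrow> 0 < R \<longrightarrow> 0 < \<epsilon> \<longrightarrow>
           continuous_on (SigmaR \<nu> R) w \<longrightarrow>
           visc_sub_Pplus lam Lam (SigmaR \<nu> R) w \<longrightarrow>
           visc_super_Pminus lam Lam (SigmaR \<nu> R) w \<longrightarrow>
           visc_neumann \<nu> (SigmaR \<nu> R) (GammaN \<nu> \<inter> SigmaR \<nu> R) w \<longrightarrow>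
           (\<forall>x\<in>GammaD \<nu> \<inter> SigmaR \<nu> R. w x = 0) \<longrightarrow>
           (\<forall>x\<in>SigmaR \<nu> R. \<bar>w x\<bar> \<le> R powr (2 - \<epsilon>)) \<longrightarrow>
           (\<forall>x\<in>SigmaR \<nu> R. norm (tang \<nu> x) \<le> 1 \<longrightarrow> \<bar>w x\<bar> \<le> C * R powr (- \<epsilon>))"
proof -
  define n where "n = real CARD('n)"
  have n1: "n \<ge> 1" unfolding n_def by simp
  define C where "C = 2 + 2*Lam*n/lam"
  have Cpos: "C > 0" unfolding C_def using assms n1 by (simp add: add_pos_nonneg)
  show ?thesis
  proof (rule exI[of _ C], intro conjI allI impI ballI)
    show "C > 0" by (rule Cpos)
  next
    fix \<nu> :: "real^'n" and R \<epsilon> :: real and w :: "real^'n \<Rightarrow> real" and x0 :: "real^'n"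
    assume nu: "norm \<nu> = 1" and R: "0 < R" and eps: "0 < \<epsilon>"
      and cont: "continuous_on (SigmaR \<nu> R) w"
      and sub: "visc_sub_Pplus lam Lam (SigmaR \<nu> R) w"
      and sup: "visc_super_Pminus lam Lam (SigmaR \<nu> R) w"
      and neu: "visc_neumann \<nu> (SigmaR \<nu> R) (GammaN \<nu> \<inter> SigmaR \<nu> R) w"
      and dir: "\<forall>x\<in>GammaD \<nu> \<inter> SigmaR \<nu> R. w x = 0"
      and bd: "\<forall>x\<in>SigmaR \<nu> R. \<bar>w x\<bar> \<le> R powr (2 - \<epsilon>)"
      and x0: "x0 \<in> SigmaR \<nu> R" and x01: "norm (tang \<nu> x0) \<le> 1"
    define S where "S = SigmaR \<nu> R"
    have nn: "\<nu>\<bullet>\<nu> = 1" using nu by (metis norm_eq_1)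
    define a where "a = R powr (-\<epsilon>)"
    have apos: "a > 0" unfolding a_def using R by simp
    define K where "K = 4*a*Lam*n/lam"
    have Kpos: "K > 0" unfolding K_def using apos assms n1 by simp
    have lamK: "lam * K = 4*a*Lam*n" unfolding K_def using assms by simp
    define b where "b = a"
    define c where "c = K/2 + b"
    define q where "q = a + K/2"
    define \<psi> where "\<psi> = (\<lambda>x::real^'n. (2*a)/2*(x\<bullet>x) + (-2*q)/2*(x\<bullet>\<nu>)^2 + b*(x\<bullet>\<nu>) + c)"
    define D\<psi> where "D\<psi> = (\<lambda>x::real^'n. (2*a) *\<^sub>R x + ((-2*q)*(x\<bullet>\<nu>) + b) *\<^sub>R \<nu>)"
    define H where "H = (\<lambda>x::real^'n. (\<chi> i j. (2*a)*(if i=j then 1 else 0) + (-2*q)*\<nu>$i*\<nu>$j) :: real^'n^'n)"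
    define m\<psi> where "m\<psi> = (\<lambda>x::real^'n. (-2*a)/2*(x\<bullet>x) + (2*q)/2*(x\<bullet>\<nu>)^2 + (-b)*(x\<bullet>\<nu>) + (-c))"
    define Dm\<psi> where "Dm\<psi> = (\<lambda>x::real^'n. (-2*a) *\<^sub>R x + ((2*q)*(x\<bullet>\<nu>) + (-b)) *\<^sub>R \<nu>)"
    define Hm where "Hm = (\<lambda>x::real^'n. (\<chi> i j. (-2*a)*(if i=j then 1 else 0) + (2*q)*\<nu>$i*\<nu>$j) :: real^'n^'n)"
    have C2p: "C2_test \<psi> D\<psi> H" unfolding \<psi>_def D\<psi>_def H_def by (rule quad_C2)
    have C2m: "C2_test m\<psi> Dm\<psi> Hm" unfolding m\<psi>_def Dm\<psi>_def Hm_def by (rule quad_C2)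
    have m\<psi>_eq: "m\<psi> x = - \<psi> x" for x unfolding m\<psi>_def \<psi>_def by simp
    have \<psi>_form: "\<psi> x = a * (norm (tang \<nu> x))^2 + (K/2*((1 - x\<bullet>\<nu>)*(1 + x\<bullet>\<nu>)) + b*(1 + x\<bullet>\<nu>))" for x
    proof -
      have xx: "x\<bullet>x = (norm (tang \<nu> x))^2 + (x\<bullet>\<nu>)^2" using tang_sq[OF nu, of x] by simp
      have alg: "a*(u+t^2) - (a+k)*t^2 + b*t + (k + b) = a*u + (k*((1-t)*(1+t)) + b*(1+t))" for u t k :: real
        by (simp add: algebra_simps power2_eq_square)
      have "\<psi> x = a*(x\<bullet>x) - (a + K/2)*(x\<bullet>\<nu>)^2 + b*(x\<bullet>\<nu>) + (K/2 + b)"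
      proof -
        have g: "(2*a)/2*X + (-2*(a+k))/2*T + b*t + (k+b) = a*X - (a+k)*T + b*t + (k+b)" for X T t k :: real
          by (simp add: field_simps)
        show ?thesis unfolding \<psi>_def q_def c_def g ..
      qed
      thus ?thesis unfolding xx alg .
    qed
    have hnn: "K/2*((1 - x\<bullet>\<nu>)*(1 + x\<bullet>\<nu>)) + b*(1 + x\<bullet>\<nu>) \<ge> 0" if "x \<in> S" for x
      using that Kpos apos unfolding S_def SigmaR_def slab_def b_def
      by (auto intro!: add_nonneg_nonneg mult_nonneg_nonneg)
    have \<psi>_nn: "\<psi> x \<ge> a * (norm (tang \<nu> x))^2" if "x \<in> S" for x
      using hnn[OF that] \<psi>_form[of x] by simp
    have cont\<psi>: "continuous_on S \<psi>" unfolding \<psi>_def by (intro continuous_intros)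
    have compS: "compact S" unfolding S_def by (rule compact_Sigma[OF nu])
    have neS: "S \<noteq> {}" using x0 unfolding S_def by auto
    have aR: "a * R^2 = R powr (2 - \<epsilon>)"
    proof -
      have "R powr (2 - \<epsilon>) = R powr (-\<epsilon>) * R powr 2" by (subst powr_add[symmetric]) simp
      also have "R powr 2 = R^2" using R by (simp add: powr_numeral)
      finally show ?thesis unfolding a_def by simp
    qed
    have lat: "\<psi> x \<ge> R powr (2 - \<epsilon>)" if "x \<in> S" "\<not> norm (tang \<nu> x) < R" for x
    proof -
      have "R^2 \<le> (norm (tang \<nu> x))^2" using that R by (intro power_mono) auto
      hence "a * R^2 \<le> a * (norm (tang \<nu> x))^2" using apos by simp
      thus ?thesis using \<psi>_nn[OF that(1)] aR by simp
    qed
    have cases: "x \<in> GammaD \<nu> \<inter> S \<or> x \<in> GammaN \<nu> \<inter> S \<or> \<not> norm (tang \<nu> x) < R \<or> x \<in> interior S"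
      if "x \<in> S" for x
      using that interior_Sigma[of x \<nu> R] unfolding S_def SigmaR_def slab_def GammaD_def GammaN_def
      by force
    have Lan: "Lam*(a*n) > 0" using assms apos n1 by simp
    have La: "Lam*a > 0" using assms apos by simp
    have PP: "pucci_plus lam Lam (H y) < 0" for y
    proof -
      have "pucci_plus lam Lam (H y) = Lam * (real (CARD('n)-1) * (2*a)) + lam * (2*a + -2*q)"
        unfolding H_def by (rule pplus_val[OF nu]) (use apos Kpos in \<open>auto simp: q_def\<close>)
      also have "\<dots> = Lam * ((n - 1) * (2*a)) - lam * K"
        unfolding n_def q_def by (simp add: of_nat_diff algebra_simps)
      also have "\<dots> < 0" using lamK by (simp add: algebra_simps) (use Lan La in linarith)
      finally show ?thesis .
    qed
    have PM: "pucci_minus lam Lam (Hm y) > 0" for y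
    proof -
      have "pucci_minus lam Lam (Hm y) = lam * (-2*a + 2*q) + Lam * (real (CARD('n)-1) * (-2*a))"
        unfolding Hm_def by (rule pminus_val[OF nu]) (use apos Kpos in \<open>auto simp: q_def\<close>)
      also have "\<dots> = lam * K - Lam * ((n - 1) * (2*a))"
        unfolding n_def q_def by (simp add: of_nat_diff algebra_simps)
      also have "\<dots> > 0" using lamK by (simp add: algebra_simps) (use Lan La in linarith)
      finally show ?thesis .
    qed
    have contS: "continuous_on S w" using cont unfolding S_def .
    have upper: "w x \<le> \<psi> x" if "x \<in> S" for x
    proof (rule ccontr)
      assume nx: "\<not> w x \<le> \<psi> x"
      obtain y where y: "y \<in> S" and ymax: "\<forall>z\<in>S. w z - \<psi> z \<le> w y - \<psi> y"
        using continuous_attains_sup[OF compS neS continuous_on_diff[OF contS cont\<psi>]] by auto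
      have pos: "w y - \<psi> y > 0" using ymax that nx by force
      have ta: "touches_above S w \<psi> y"
        unfolding touches_above_def using ymax by (intro exI[of _ 1]) auto
      from cases[OF y] show False
      proof (elim disjE)
        assume "y \<in> GammaD \<nu> \<inter> S"
        hence "w y = 0" using dir unfolding S_def by auto
        moreover have "\<psi> y \<ge> 0" using \<psi>_nn[OF y] apos by (meson order_trans zero_le_power2 mult_nonneg_nonneg less_imp_le)
        ultimately show False using pos by simp
      next
        assume yN: "y \<in> GammaN \<nu> \<inter> S"
        hence "D\<psi> y \<bullet> \<nu> \<le> 0" using neu C2p ta unfolding visc_neumann_def S_def by blast
        moreover have "D\<psi> y \<bullet> \<nu> = b" using yN nn unfolding D\<psi>_def GammaN_def by (simp add: inner_add_left)
        ultimately show False using apos b_def by simp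
      next
        assume "\<not> norm (tang \<nu> y) < R"
        hence "\<psi> y \<ge> R powr (2 - \<epsilon>)" using lat y by blast
        moreover have "w y \<le> R powr (2 - \<epsilon>)" using bd y unfolding S_def by fastforce
        ultimately show False using pos by simp
      next
        assume "y \<in> interior S"
        hence "- pucci_plus lam Lam (H y) \<le> 0" using sub C2p ta unfolding visc_sub_Pplus_def S_def by blast
        thus False using PP[of y] by simp
      qed
    qed
    have lower: "m\<psi> x \<le> w x" if "x \<in> S" for x
    proof (rule ccontr)
      assume nx: "\<not> m\<psi> x \<le> w x"
      have contm: "continuous_on S m\<psi>" unfolding m\<psi>_def by (intro continuous_intros)
      obtain y where y: "y \<in> S" and ymin: "\<forall>z\<in>S. w y - m\<psi> y \<le> w z - m\<psi> z"
        using continuous_attains_inf[OF compS neS continuous_on_diff[OF contS contm]] by auto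
      have neg: "w y - m\<psi> y < 0" using ymin that nx by force
      have tb: "touches_below S w m\<psi> y"
        unfolding touches_below_def using ymin by (intro exI[of _ 1]) auto
      from cases[OF y] show False
      proof (elim disjE)
        assume "y \<in> GammaD \<nu> \<inter> S"
        hence "w y = 0" using dir unfolding S_def by auto
        moreover have "\<psi> y \<ge> 0" using \<psi>_nn[OF y] apos by (meson order_trans zero_le_power2 mult_nonneg_nonneg less_imp_le)
        ultimately show False using neg m\<psi>_eq[of y] by simp
      next
        assume yN: "y \<in> GammaN \<nu> \<inter> S"
        hence "Dm\<psi> y \<bullet> \<nu> \<ge> 0" using neu C2m tb unfolding visc_neumann_def S_def by blast
        moreover have "Dm\<psi> y \<bullet> \<nu> = - b" using yN nn unfolding Dm\<psi>_def GammaN_def by (simp add: inner_add_left inner_diff_left)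
        ultimately show False using apos b_def by simp
      next
        assume "\<not> norm (tang \<nu> y) < R"
        hence "\<psi> y \<ge> R powr (2 - \<epsilon>)" using lat y by blast
        moreover have "w y \<ge> - (R powr (2 - \<epsilon>))" using bd y unfolding S_def by fastforce
        ultimately show False using neg m\<psi>_eq[of y] by simp
      next
        assume "y \<in> interior S"
        hence "- pucci_minus lam Lam (Hm y) \<ge> 0" using sup C2m tb unfolding visc_super_Pminus_def S_def by blast
        thus False using PM[of y] by simp
      qed
    qed
    have x0S: "x0 \<in> S" using x0 unfolding S_def .
    have t0: "-1 \<le> x0\<bullet>\<nu>" "x0\<bullet>\<nu> \<le> 0" using x0 unfolding SigmaR_def slab_def by auto
    have "(norm (tang \<nu> x0))^2 \<le> 1" using x01 by (simp add: power_le_one)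
    hence "a * (norm (tang \<nu> x0))^2 \<le> a" using apos by (simp add: mult_left_le)
    moreover have "(1 - x0\<bullet>\<nu>)*(1 + x0\<bullet>\<nu>) \<le> 1" by (simp add: algebra_simps)
    hence "K/2*((1 - x0\<bullet>\<nu>)*(1 + x0\<bullet>\<nu>)) \<le> K/2" using Kpos by (simp add: mult_left_le)
    moreover have "b*(1 + x0\<bullet>\<nu>) \<le> b" using t0 apos b_def by (simp add: mult_left_le)
    ultimately have "\<psi> x0 \<le> a + K/2 + b" using \<psi>_form[of x0] by linarith
    also have "\<dots> = C * R powr (- \<epsilon>)"
      unfolding C_def K_def b_def a_def[symmetric] using assms by (simp add: field_simps)
    finally have "\<psi> x0 \<le> C * R powr (- \<epsilon>)" .
    thus "\<bar>w x0\<bar> \<le> C * R powr (- \<epsilon>)"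
      using upper[OF x0S] lower[OF x0S] m\<psi>_eq[of x0] by simp
  qed
qed

end
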